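(* Let $G$ be a graph of order $n$. Then $a(G)+a(\overline{G})\le n+4$. Moreover, this bound is sharp: for every $n\ge 4$, the path $P_n$ on $n$ vertices satisfies $a(P_n)+a(\overline{P_n})=n+4$.
   Context: All graphs are finite and simple; $\overline{G}$ denotes the complement of $G$. For a graph $G$, $a(G)$ denotes the maximum number of vertices of an induced subgraph of $G$ that is a forest. The order of a graph is its number of vertices. *)

theory Defs
  imports Main
begin

definition simple_graph :: "'a set \<Rightarrow> ('a \<Rightarrow> 'a \<Rightarrow> bool) \<Rightarrow> bool" where
  "simple_graph V E \<longleftrightarrow> finite V \<and> (\<forall>x\<in>V. \<forall>y\<in>V. E x y \<longrightarrow> E y x) \<and> (\<forall>x\<in>V. \<not> E x x)"

definition compl_graph :: "('a \<Rightarrow> 'a \<Rightarrow> bool) \<Rightarrow> 'a \<Rightarrow> 'a \<Rightarrow> bool" where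
  "compl_graph E = (\<lambda>x y. x \<noteq> y \<and> \<not> E x y)"

definition is_cycle_in :: "'a set \<Rightarrow> ('a \<Rightarrow> 'a \<Rightarrow> bool) \<Rightarrow> 'a list \<Rightarrow> bool" where
  "is_cycle_in S E cs \<longleftrightarrow> length cs \<ge> 3 \<and> distinct cs \<and> set cs \<subseteq> S \<and>
     (\<forall>i < length cs. E (cs ! i) (cs ! ((i + 1) mod length cs)))"

definition induced_forest :: "'a set \<Rightarrow> ('a \<Rightarrow> 'a \<Rightarrow> bool) \<Rightarrow> 'a set \<Rightarrow> bool" where
  "induced_forest V E S \<longleftrightarrow> S \<subseteq> V \<and> \<not> (\<exists>cs. is_cycle_in S E cs)"

definition forest_number :: "'a set \<Rightarrow> ('a \<Rightarrow> 'a \<Rightarrow> bool) \<Rightarrow> nat" where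
  "forest_number V E = Max {card S | S. induced_forest V E S}"

text \<open>The path P_n on vertices 0,...,n-1.\<close>
definition path_edge :: "nat \<Rightarrow> nat \<Rightarrow> bool" where
  "path_edge i j \<longleftrightarrow> j = i + 1 \<or> i = j + 1"

end

theory Submission
  imports Defs
begin

lemma cyc_mono: "is_cycle_in S R cs \<Longrightarrow> S \<subseteq> T \<Longrightarrow> is_cycle_in T R cs"
  unfolding is_cycle_in_def by auto

lemma all5: "(\<forall>i<5::nat. P i) \<longleftrightarrow> P 0 \<and> P 1 \<and> P 2 \<and> P 3 \<and> P 4"
  by (auto simp: numeral_eq_Suc less_Suc_eq)
lemma all3: "(\<forall>i<3::nat. P i) \<longleftrightarrow> P 0 \<and> P 1 \<and> P 2"
  by (auto simp: numeral_eq_Suc less_Suc_eq)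
lemma tri: assumes "distinct [x,y,z]" "{x,y,z} \<subseteq> S" "R x y" "R y z" "R z x"
  shows "\<exists>cs. is_cycle_in S R cs"
proof
  have l: "length [x,y,z] = 3" by simp
  show "is_cycle_in S R [x,y,z]" using assms unfolding is_cycle_in_def l all3
    by simp
qed
lemma pent: assumes "distinct [x,y,z,u,v]" "{x,y,z,u,v} \<subseteq> S" "R x y" "R y z" "R z u" "R u v" "R v x"
  shows "\<exists>cs. is_cycle_in S R cs"
proof
  have l: "length [x,y,z,u,v] = 5" by simp
  show "is_cycle_in S R [x,y,z,u,v]" using assms unfolding is_cycle_in_def l all5
    by simp
qed

lemma tri_sym: assumes "\<forall>x\<in>S. \<forall>y\<in>S. R x y \<longrightarrow> R y x" "distinct [x,y,z]" "{x,y,z} \<subseteq> S" "R x y \<or> R y x" "R y z \<or> R z y" "R x z \<or> R z x"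
  shows "\<exists>cs. is_cycle_in S R cs"
  using tri[of x y z S R] assms by blast

lemma pent_sym: assumes "\<forall>x\<in>S. \<forall>y\<in>S. R x y \<longrightarrow> R y x" "distinct [x,y,z,u,v]" "{x,y,z,u,v} \<subseteq> S" "R x y \<or> R y x" "R y z \<or> R z y" "R z u \<or> R u z" "R u v \<or> R v u" "R x v \<or> R v x"
  shows "\<exists>cs. is_cycle_in S R cs"
  using pent[of x y z u v S R] assms by blast

lemma five: assumes dist: "distinct [a,b,c,d,e]"
  and sym: "\<forall>x\<in>{a,b,c,d,e}. \<forall>y\<in>{a,b,c,d,e}. E x y \<longrightarrow> E y x"
  shows "(\<exists>cs. is_cycle_in {a,b,c,d,e} E cs) \<or> (\<exists>cs. is_cycle_in {a,b,c,d,e} (compl_graph E) cs)"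
proof -
  let ?S = "{a,b,c,d,e}"
  have symC: "\<forall>x\<in>?S. \<forall>y\<in>?S. compl_graph E x y \<longrightarrow> compl_graph E y x"
    using sym unfolding compl_graph_def by blast
  have taut: "(E a b \<and> E b c \<and> E a c) \<or>
    (\<not> E a b \<and> \<not> E b c \<and> \<not> E a c) \<or>
    (E a b \<and> E b d \<and> E a d) \<or>
    (\<not> E a b \<and> \<not> E b d \<and> \<not> E a d) \<or>
    (E a b \<and> E b e \<and> E a e) \<or>
    (\<not> E a b \<and> \<not> E b e \<and> \<not> E a e) \<or>
    (E a c \<and> E c d \<and> E a d) \<or>
    (\<not> E a c \<and> \<not> E c d \<and> \<not> E a d) \<or>
    (E a c \<and> E c e \<and> E a e) \<or>
    (\<not> E a c \<and> \<not> E c e \<and> \<not> E a e) \<or>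
    (E a d \<and> E d e \<and> E a e) \<or>
    (\<not> E a d \<and> \<not> E d e \<and> \<not> E a e) \<or>
    (E b c \<and> E c d \<and> E b d) \<or>
    (\<not> E b c \<and> \<not> E c d \<and> \<not> E b d) \<or>
    (E b c \<and> E c e \<and> E b e) \<or>
    (\<not> E b c \<and> \<not> E c e \<and> \<not> E b e) \<or>
    (E b d \<and> E d e \<and> E b e) \<or>
    (\<not> E b d \<and> \<not> E d e \<and> \<not> E b e) \<or>
    (E c d \<and> E d e \<and> E c e) \<or>
    (\<not> E c d \<and> \<not> E d e \<and> \<not> E c e) \<or>
    (E a b \<and> E b c \<and> E c d \<and> E d e \<and> E a e) \<or>
    (\<not> E a b \<and> \<not> E b c \<and> \<not> E c d \<and> \<not> E d e \<and> \<not> E a e) \<or>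
    (E a b \<and> E b c \<and> E c e \<and> E d e \<and> E a d) \<or>
    (\<not> E a b \<and> \<not> E b c \<and> \<not> E c e \<and> \<not> E d e \<and> \<not> E a d) \<or>
    (E a b \<and> E b d \<and> E c d \<and> E c e \<and> E a e) \<or>
    (\<not> E a b \<and> \<not> E b d \<and> \<not> E c d \<and> \<not> E c e \<and> \<not> E a e) \<or>
    (E a b \<and> E b d \<and> E d e \<and> E c e \<and> E a c) \<or>
    (\<not> E a b \<and> \<not> E b d \<and> \<not> E d e \<and> \<not> E c e \<and> \<not> E a c) \<or>
    (E a b \<and> E b e \<and> E c e \<and> E c d \<and> E a d) \<or>
    (\<not> E a b \<and> \<not> E b e \<and> \<not> E c e \<and> \<not> E c d \<and> \<not> E a d) \<or>
    (E a b \<and> E b e \<and> E d e \<and> E c d \<and> E a c) \<or>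
    (\<not> E a b \<and> \<not> E b e \<and> \<not> E d e \<and> \<not> E c d \<and> \<not> E a c) \<or>
    (E a c \<and> E b c \<and> E b d \<and> E d e \<and> E a e) \<or>
    (\<not> E a c \<and> \<not> E b c \<and> \<not> E b d \<and> \<not> E d e \<and> \<not> E a e) \<or>
    (E a c \<and> E b c \<and> E b e \<and> E d e \<and> E a d) \<or>
    (\<not> E a c \<and> \<not> E b c \<and> \<not> E b e \<and> \<not> E d e \<and> \<not> E a d) \<or>
    (E a c \<and> E c d \<and> E b d \<and> E b e \<and> E a e) \<or>
    (\<not> E a c \<and> \<not> E c d \<and> \<not> E b d \<and> \<not> E b e \<and> \<not> E a e) \<or>
    (E a c \<and> E c e \<and> E b e \<and> E b d \<and> E a d) \<or>
    (\<not> E a c \<and> \<not> E c e \<and> \<not> E b e \<and> \<not> E b d \<and> \<not> E a d) \<or>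
    (E a d \<and> E b d \<and> E b c \<and> E c e \<and> E a e) \<or>
    (\<not> E a d \<and> \<not> E b d \<and> \<not> E b c \<and> \<not> E c e \<and> \<not> E a e) \<or>
    (E a d \<and> E c d \<and> E b c \<and> E b e \<and> E a e) \<or>
    (\<not> E a d \<and> \<not> E c d \<and> \<not> E b c \<and> \<not> E b e \<and> \<not> E a e)"
    by sat
  then show ?thesis
  proof (elim disjE)
    assume h: "(E a b \<and> E b c \<and> E a c)"
    show ?thesis using tri_sym[OF sym, of a b c] h dist by auto
  next
    assume h: "(\<not> E a b \<and> \<not> E b c \<and> \<not> E a c)"
    show ?thesis using tri_sym[OF symC, of a b c] h dist by (auto simp add: compl_graph_def)
  next
    assume h: "(E a b \<and> E b d \<and> E a d)"
    show ?thesis using tri_sym[OF sym, of a b d] h dist by auto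
  next
    assume h: "(\<not> E a b \<and> \<not> E b d \<and> \<not> E a d)"
    show ?thesis using tri_sym[OF symC, of a b d] h dist by (auto simp add: compl_graph_def)
  next
    assume h: "(E a b \<and> E b e \<and> E a e)"
    show ?thesis using tri_sym[OF sym, of a b e] h dist by auto
  next
    assume h: "(\<not> E a b \<and> \<not> E b e \<and> \<not> E a e)"
    show ?thesis using tri_sym[OF symC, of a b e] h dist by (auto simp add: compl_graph_def)
  next
    assume h: "(E a c \<and> E c d \<and> E a d)"
    show ?thesis using tri_sym[OF sym, of a c d] h dist by auto
  next
    assume h: "(\<not> E a c \<and> \<not> E c d \<and> \<not> E a d)"
    show ?thesis using tri_sym[OF symC, of a c d] h dist by (auto simp add: compl_graph_def)
  next
    assume h: "(E a c \<and> E c e \<and> E a e)"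
    show ?thesis using tri_sym[OF sym, of a c e] h dist by auto
  next
    assume h: "(\<not> E a c \<and> \<not> E c e \<and> \<not> E a e)"
    show ?thesis using tri_sym[OF symC, of a c e] h dist by (auto simp add: compl_graph_def)
  next
    assume h: "(E a d \<and> E d e \<and> E a e)"
    show ?thesis using tri_sym[OF sym, of a d e] h dist by auto
  next
    assume h: "(\<not> E a d \<and> \<not> E d e \<and> \<not> E a e)"
    show ?thesis using tri_sym[OF symC, of a d e] h dist by (auto simp add: compl_graph_def)
  next
    assume h: "(E b c \<and> E c d \<and> E b d)"
    show ?thesis using tri_sym[OF sym, of b c d] h dist by auto
  next
    assume h: "(\<not> E b c \<and> \<not> E c d \<and> \<not> E b d)"
    show ?thesis using tri_sym[OF symC, of b c d] h dist by (auto simp add: compl_graph_def)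
  next
    assume h: "(E b c \<and> E c e \<and> E b e)"
    show ?thesis using tri_sym[OF sym, of b c e] h dist by auto
  next
    assume h: "(\<not> E b c \<and> \<not> E c e \<and> \<not> E b e)"
    show ?thesis using tri_sym[OF symC, of b c e] h dist by (auto simp add: compl_graph_def)
  next
    assume h: "(E b d \<and> E d e \<and> E b e)"
    show ?thesis using tri_sym[OF sym, of b d e] h dist by auto
  next
    assume h: "(\<not> E b d \<and> \<not> E d e \<and> \<not> E b e)"
    show ?thesis using tri_sym[OF symC, of b d e] h dist by (auto simp add: compl_graph_def)
  next
    assume h: "(E c d \<and> E d e \<and> E c e)"
    show ?thesis using tri_sym[OF sym, of c d e] h dist by auto
  next
    assume h: "(\<not> E c d \<and> \<not> E d e \<and> \<not> E c e)"
    show ?thesis using tri_sym[OF symC, of c d e] h dist by (auto simp add: compl_graph_def)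
  next
    assume h: "(E a b \<and> E b c \<and> E c d \<and> E d e \<and> E a e)"
    show ?thesis using pent_sym[OF sym, of a b c d e] h dist by auto
  next
    assume h: "(\<not> E a b \<and> \<not> E b c \<and> \<not> E c d \<and> \<not> E d e \<and> \<not> E a e)"
    show ?thesis using pent_sym[OF symC, of a b c d e] h dist by (auto simp add: compl_graph_def)
  next
    assume h: "(E a b \<and> E b c \<and> E c e \<and> E d e \<and> E a d)"
    show ?thesis using pent_sym[OF sym, of a b c e d] h dist by auto
  next
    assume h: "(\<not> E a b \<and> \<not> E b c \<and> \<not> E c e \<and> \<not> E d e \<and> \<not> E a d)"
    show ?thesis using pent_sym[OF symC, of a b c e d] h dist by (auto simp add: compl_graph_def)
  next
    assume h: "(E a b \<and> E b d \<and> E c d \<and> E c e \<and> E a e)"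
    show ?thesis using pent_sym[OF sym, of a b d c e] h dist by auto
  next
    assume h: "(\<not> E a b \<and> \<not> E b d \<and> \<not> E c d \<and> \<not> E c e \<and> \<not> E a e)"
    show ?thesis using pent_sym[OF symC, of a b d c e] h dist by (auto simp add: compl_graph_def)
  next
    assume h: "(E a b \<and> E b d \<and> E d e \<and> E c e \<and> E a c)"
    show ?thesis using pent_sym[OF sym, of a b d e c] h dist by auto
  next
    assume h: "(\<not> E a b \<and> \<not> E b d \<and> \<not> E d e \<and> \<not> E c e \<and> \<not> E a c)"
    show ?thesis using pent_sym[OF symC, of a b d e c] h dist by (auto simp add: compl_graph_def)
  next
    assume h: "(E a b \<and> E b e \<and> E c e \<and> E c d \<and> E a d)"
    show ?thesis using pent_sym[OF sym, of a b e c d] h dist by auto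
  next
    assume h: "(\<not> E a b \<and> \<not> E b e \<and> \<not> E c e \<and> \<not> E c d \<and> \<not> E a d)"
    show ?thesis using pent_sym[OF symC, of a b e c d] h dist by (auto simp add: compl_graph_def)
  next
    assume h: "(E a b \<and> E b e \<and> E d e \<and> E c d \<and> E a c)"
    show ?thesis using pent_sym[OF sym, of a b e d c] h dist by auto
  next
    assume h: "(\<not> E a b \<and> \<not> E b e \<and> \<not> E d e \<and> \<not> E c d \<and> \<not> E a c)"
    show ?thesis using pent_sym[OF symC, of a b e d c] h dist by (auto simp add: compl_graph_def)
  next
    assume h: "(E a c \<and> E b c \<and> E b d \<and> E d e \<and> E a e)"
    show ?thesis using pent_sym[OF sym, of a c b d e] h dist by auto
  next
    assume h: "(\<not> E a c \<and> \<not> E b c \<and> \<not> E b d \<and> \<not> E d e \<and> \<not> E a e)"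
    show ?thesis using pent_sym[OF symC, of a c b d e] h dist by (auto simp add: compl_graph_def)
  next
    assume h: "(E a c \<and> E b c \<and> E b e \<and> E d e \<and> E a d)"
    show ?thesis using pent_sym[OF sym, of a c b e d] h dist by auto
  next
    assume h: "(\<not> E a c \<and> \<not> E b c \<and> \<not> E b e \<and> \<not> E d e \<and> \<not> E a d)"
    show ?thesis using pent_sym[OF symC, of a c b e d] h dist by (auto simp add: compl_graph_def)
  next
    assume h: "(E a c \<and> E c d \<and> E b d \<and> E b e \<and> E a e)"
    show ?thesis using pent_sym[OF sym, of a c d b e] h dist by auto
  next
    assume h: "(\<not> E a c \<and> \<not> E c d \<and> \<not> E b d \<and> \<not> E b e \<and> \<not> E a e)"
    show ?thesis using pent_sym[OF symC, of a c d b e] h dist by (auto simp add: compl_graph_def)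
  next
    assume h: "(E a c \<and> E c e \<and> E b e \<and> E b d \<and> E a d)"
    show ?thesis using pent_sym[OF sym, of a c e b d] h dist by auto
  next
    assume h: "(\<not> E a c \<and> \<not> E c e \<and> \<not> E b e \<and> \<not> E b d \<and> \<not> E a d)"
    show ?thesis using pent_sym[OF symC, of a c e b d] h dist by (auto simp add: compl_graph_def)
  next
    assume h: "(E a d \<and> E b d \<and> E b c \<and> E c e \<and> E a e)"
    show ?thesis using pent_sym[OF sym, of a d b c e] h dist by auto
  next
    assume h: "(\<not> E a d \<and> \<not> E b d \<and> \<not> E b c \<and> \<not> E c e \<and> \<not> E a e)"
    show ?thesis using pent_sym[OF symC, of a d b c e] h dist by (auto simp add: compl_graph_def)
  next
    assume h: "(E a d \<and> E c d \<and> E b c \<and> E b e \<and> E a e)"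
    show ?thesis using pent_sym[OF sym, of a d c b e] h dist by auto
  next
    assume h: "(\<not> E a d \<and> \<not> E c d \<and> \<not> E b c \<and> \<not> E b e \<and> \<not> E a e)"
    show ?thesis using pent_sym[OF symC, of a d c b e] h dist by (auto simp add: compl_graph_def)
  qed
qed


lemma cyc_nbrs:
  assumes c: "is_cycle_in S R cs" and x: "x \<in> set cs"
  shows "\<exists>y z. y \<noteq> z \<and> y \<in> set cs \<and> z \<in> set cs \<and> R x y \<and> R z x"
proof -
  define L where "L = length cs"
  have L3: "L \<ge> 3" and dist: "distinct cs" and st: "\<forall>i<L. R (cs ! i) (cs ! ((i + 1) mod L))"
    using c unfolding is_cycle_in_def L_def by auto
  obtain i where i: "i < L" "x = cs ! i" using x unfolding L_def by (metis in_set_conv_nth)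
  define j where "j = (i + L - 1) mod L"
  have jL: "j < L" using L3 unfolding j_def by simp
  have ji: "(j + 1) mod L = i"
  proof (cases "i = 0")
    case True then show ?thesis using L3 unfolding j_def by simp
  next
    case False then have "j = i - 1" using i L3 unfolding j_def
      by (metis Nat.add_diff_assoc2 add.commute le_add1 less_imp_diff_less mod_add_self1 mod_less not_gr_zero Suc_leI One_nat_def) 
    then show ?thesis using False i by simp
  qed
  have ne: "(i + 1) mod L \<noteq> j"
  proof (cases "i = 0")
    case True then show ?thesis using L3 unfolding j_def by simp
  next
    case False
    then have "j = i - 1" using i L3 unfolding j_def
      by (metis Nat.add_diff_assoc2 add.commute le_add1 less_imp_diff_less mod_add_self1 mod_less not_gr_zero Suc_leI One_nat_def)
    moreover have "i + 1 < L \<or> i + 1 = L" using i by auto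
    ultimately show ?thesis using False L3 i by auto
  qed
  have m: "(i + 1) mod L < L" using L3 by simp
  show ?thesis
  proof (intro exI conjI)
    show "cs ! ((i + 1) mod L) \<noteq> cs ! j" using ne m jL dist unfolding L_def by (simp add: nth_eq_iff_index_eq)
    show "cs ! ((i + 1) mod L) \<in> set cs" using m unfolding L_def by simp
    show "cs ! j \<in> set cs" using jL unfolding L_def by simp
    show "R x (cs ! ((i + 1) mod L))" using st i by simp
    show "R (cs ! j) x" using st[rule_format, OF jL] ji i by simp
  qed
qed

lemma fn_ge: assumes "finite V" "induced_forest V E S" shows "card S \<le> forest_number V E"
proof -
  have "{card S |S. induced_forest V E S} \<subseteq> {..card V}"
    using assms(1) by (auto simp: induced_forest_def intro: card_mono)
  then have "finite {card S |S. induced_forest V E S}" by (rule finite_subset) simp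
  then show ?thesis unfolding forest_number_def using assms(2) by (auto intro: Max_ge)
qed

lemma fn_le: assumes "finite V" shows "forest_number V E \<le> card V"
proof -
  have "induced_forest V E {}" unfolding induced_forest_def is_cycle_in_def by auto
  have sub: "{card S |S. induced_forest V E S} \<subseteq> {..card V}"
    using assms(1) by (auto simp: induced_forest_def intro: card_mono)
  then have "finite {card S |S. induced_forest V E S}" by (rule finite_subset) simp
  moreover have "{card S |S. induced_forest V E S} \<noteq> {}" using \<open>induced_forest V E {}\<close> by blast
  ultimately have "forest_number V E \<in> {card S |S. induced_forest V E S}"
    unfolding forest_number_def by (rule Max_in)
  then show ?thesis using sub by auto
qed

lemma fn_obt: assumes "finite V" shows "\<exists>S. induced_forest V E S \<and> card S = forest_number V E"
proof -
  have "induced_forest V E {}" unfolding induced_forest_def is_cycle_in_def by auto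
  have "{card S |S. induced_forest V E S} \<subseteq> {..card V}"
    using assms(1) by (auto simp: induced_forest_def intro: card_mono)
  then have "finite {card S |S. induced_forest V E S}" by (rule finite_subset) simp
  moreover have "{card S |S. induced_forest V E S} \<noteq> {}" using \<open>induced_forest V E {}\<close> by blast
  ultimately have "forest_number V E \<in> {card S |S. induced_forest V E S}"
    unfolding forest_number_def by (rule Max_in)
  then show ?thesis by auto
qed

lemma part1:
  assumes G: "simple_graph V E"
  shows "forest_number V E + forest_number V (compl_graph E) \<le> card V + 4"
proof -
  have fin: "finite V" and sym: "\<forall>x\<in>V. \<forall>y\<in>V. E x y \<longrightarrow> E y x" using G unfolding simple_graph_def by auto
  obtain F where F: "induced_forest V E F" "card F = forest_number V E" using fn_obt[OF fin] by blast
  obtain F' where F': "induced_forest V (compl_graph E) F'" "card F' = forest_number V (compl_graph E)"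
    using fn_obt[OF fin] by blast
  have sF: "F \<subseteq> V" "F' \<subseteq> V" using F(1) F'(1) unfolding induced_forest_def by auto
  have finF: "finite F" "finite F'" using sF fin finite_subset by auto
  have I4: "card (F \<inter> F') \<le> 4"
  proof (rule ccontr)
    assume "\<not> ?thesis"
    then have "5 \<le> card (F \<inter> F')" by simp
    then obtain T where T: "T \<subseteq> F \<inter> F'" "card T = 5" "finite T" by (rule obtain_subset_with_card_n)
    obtain xs where xs: "set xs = T" "distinct xs" using T(3) finite_distinct_list by blast
    have "length xs = 5" using xs T(2) distinct_card by metis
    then obtain a b c d e where abc: "xs = [a,b,c,d,e]"
      by (auto simp: numeral_eq_Suc length_Suc_conv)
    have TV: "{a,b,c,d,e} \<subseteq> V" using T(1) sF xs(1) abc by auto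
    have "(\<exists>cs. is_cycle_in {a,b,c,d,e} E cs) \<or> (\<exists>cs. is_cycle_in {a,b,c,d,e} (compl_graph E) cs)"
      apply (rule five)
      using xs(2) abc apply simp
      using sym TV by blast
    moreover have "{a,b,c,d,e} \<subseteq> F" "{a,b,c,d,e} \<subseteq> F'" using T(1) xs(1) abc by auto
    ultimately show False using F(1) F'(1) cyc_mono unfolding induced_forest_def by metis
  qed
  have "card F + card F' = card (F \<union> F') + card (F \<inter> F')" using card_Un_Int finF by blast
  moreover have "card (F \<union> F') \<le> card V" using sF fin by (simp add: card_mono)
  ultimately show ?thesis using F(2) F'(2) I4 by linarith
qed

lemma path_forest: "induced_forest {0..<n} path_edge {0..<n}"
  unfolding induced_forest_def
proof (intro conjI notI; clarify?)
  fix cs assume c: "is_cycle_in {0..<n} path_edge cs"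
  then have ne: "set cs \<noteq> {}" unfolding is_cycle_in_def by auto
  define m where "m = Min (set cs)"
  have mi: "m \<in> set cs" using ne unfolding m_def by simp
  have mle: "\<And>y. y \<in> set cs \<Longrightarrow> m \<le> y" unfolding m_def by simp
  obtain y z where "y \<noteq> z" "y \<in> set cs" "z \<in> set cs" "path_edge m y" "path_edge z m"
    using cyc_nbrs[OF c mi] by blast
  then show False using mle unfolding path_edge_def by force
qed

lemma cpath_forest: "induced_forest {0..<n} (compl_graph path_edge) {0,1,2,3::nat}" if "n \<ge> 4"
  unfolding induced_forest_def
proof (intro conjI notI; clarify?)
  fix cs assume c: "is_cycle_in {0,1,2,3} (compl_graph path_edge) cs"
  have n1: "1 \<notin> set cs"
  proof
    assume "1 \<in> set cs"
    then obtain y z where "y \<noteq> z" "y \<in> set cs" "z \<in> set cs" "compl_graph path_edge 1 y" "compl_graph path_edge z 1"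
      using cyc_nbrs[OF c] by blast
    moreover have "set cs \<subseteq> {0,1,2,3}" using c unfolding is_cycle_in_def by auto
    ultimately have "y \<in> {0,1,2,3}" "z \<in> {0,1,2,3}" "y \<noteq> z" "compl_graph path_edge 1 y"
       "compl_graph path_edge z 1" by auto
    then show False unfolding compl_graph_def path_edge_def by auto
  qed
  have n2: "2 \<notin> set cs"
  proof
    assume "2 \<in> set cs"
    then obtain y z where "y \<noteq> z" "y \<in> set cs" "z \<in> set cs" "compl_graph path_edge 2 y" "compl_graph path_edge z 2"
      using cyc_nbrs[OF c] by blast
    moreover have "set cs \<subseteq> {0,1,2,3}" using c unfolding is_cycle_in_def by auto
    ultimately have "y \<in> {0,1,2,3}" "z \<in> {0,1,2,3}" "y \<noteq> z" "compl_graph path_edge 2 y"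
       "compl_graph path_edge z 2" by auto
    then show False unfolding compl_graph_def path_edge_def by auto
  qed
  have "set cs \<subseteq> {0,3}" using c n1 n2 unfolding is_cycle_in_def by auto
  then have "card (set cs) \<le> card {0,3::nat}" by (intro card_mono) auto
  then have "card (set cs) \<le> 2" by simp
  moreover have "card (set cs) = length cs" "length cs \<ge> 3" using c unfolding is_cycle_in_def by (auto simp: distinct_card)
  ultimately show False by simp
qed (use that in auto)

lemma sg_path: "simple_graph {0..<n} path_edge"
  unfolding simple_graph_def path_edge_def by auto

theorem theorem3:
  shows "(\<forall>(V :: 'a set) E n. simple_graph V E \<and> card V = n \<longrightarrow>
            forest_number V E + forest_number V (compl_graph E) \<le> n + 4)
       \<and> (\<forall>n::nat. n \<ge> 4 \<longrightarrow>
            forest_number {0..<n} path_edge + forest_number {0..<n} (compl_graph path_edge) = n + 4)"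
proof (intro conjI allI impI)
  fix V :: "'a set" and E n assume "simple_graph V E \<and> card V = n"
  then show "forest_number V E + forest_number V (compl_graph E) \<le> n + 4" using part1 by blast
next
  fix n :: nat assume n: "n \<ge> 4"
  have a: "forest_number {0..<n} path_edge \<ge> n" using fn_ge[OF _ path_forest] by fastforce
  have b: "forest_number {0..<n} (compl_graph path_edge) \<ge> 4" using fn_ge[OF _ cpath_forest[OF n]] by fastforce
  have c: "forest_number {0..<n} path_edge + forest_number {0..<n} (compl_graph path_edge) \<le> n + 4"
    using part1[OF sg_path] by simp
  show "forest_number {0..<n} path_edge + forest_number {0..<n} (compl_graph path_edge) = n + 4"
    using a b c by linarith
qed

end
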